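(* Let $(V_o,w_o,\mu_o)$ be a simple weighted graph with adapted weight $\sigma_o$, fix $\bar x\in V_o$, and let $(V,w,\mu)$ be its modified graph with weight $\mathfrak n$ and adapted path metric $d_\sigma$, with edge set $E$. Assume the balls of $(V,d_\sigma)$ are finite. For $n\in\mathbb N$ let $R_n=2^{n+4}$ and set: - $B_n^o=B_{d_\sigma}(\bar x,R_n-1)\cap V_o$; - $E^o_n=\{(x,y)\in E_o: x,y\in B^o_n\}$; - $B_n'=B_n^o\cup\bigcup_{e\in E_n^o}V_e$ (with $V_e$ taken for whichever orientation of $e$ lies in $E_o^+$); - $B_n=\operatorname{int}(B_n')$. Here closures, interiors and boundaries are taken with respect to the graph $(V,E)$. Then: (1) $\partial B_n\subseteq V_o$; (2) $B_{d_\sigma}(\bar x,R_n-3)\subseteq B_n\subseteq B_{d_\sigma}(\bar x,R_n)$; (3) for all $n\ge1$, if $x\in\partial B_{n-1}$ and $y\in\partial B_n$, then $d_\sigma(x,y)\ge R_{n-1}-3$.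
   Context: **Weighted graphs.** A simple weighted graph $(V,w,\mu)$ consists of a countably infinite set $V$, a symmetric function $w:V\times V\to[0,\infty)$ and a function $\mu:V\to(0,\infty)$. The graph with edges $\{x\sim y:w(x,y)>0\}$ is assumed to be locally finite, connected, and without loops or multiple edges. **Adapted weights and metrics.** An adapted weight is a symmetric $\sigma:E\to(0,1]$ with $\frac1{\mu(x)}\sum_y w(x,y)\sigma(x,y)^2\le1$ for all $x$. The adapted path metric $d_\sigma(x,y)$ is the infimum of $\sum_i\sigma(x_i,x_{i+1})$ over paths $x=x_0\sim\cdots\sim x_n=y$. Closed balls are $B_d(x,r)=\{y:d(x,y)\le r\}$. **Modified graph.** Fix an orientation $E_o^+$ of $E_o$, and let $\mathfrak n:E_o\to\mathbb N_+$ be symmetric with $\mathfrak n\ge2$. For $e=(x,y)\in E_o^+$, add distinct new vertices $V_e=\{x^e_1,\dots,x^e_{\mathfrak n(e)-1}\}$, set $x_0^e=x$, $x^e_{\mathfrak n(e)}=y$, and replace the edge $x\sim y$ by the path $x^e_0\sim\cdots\sim x^e_{\mathfrak n(e)}$; $E$ is the resulting edge set on $V=V_o\cup\bigcup_eV_e$. Weights and measure: - $w(x^e_i,x^e_{i+1})=\mathfrak n(e)w_o(e)$, symmetric, and $w=0$ otherwise; - $\mu=\mu_o$ on $V_o$, and $\mu(x^e_i)=2w_o(e)\sigma_o(e)^2/\mathfrak n(e)$; - $\sigma(x^e_i,x^e_{i+1})=\sigma_o(e)/\mathfrak n(e)$. **Graph closure, boundary, interior.** For finite $K\subseteq V$: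 - $\mathrm{cl}(K)=K\cup\{x:\exists y\in K,\ x\sim y\}$; - $\partial K=\mathrm{cl}(K)\setminus K$; - $\operatorname{int}(K)$ is the largest $L\subseteq K$ with $\mathrm{cl}(L)\subseteq K$. *)

theory Defs
  imports Complex_Main "HOL-Library.Countable_Set"
begin

definition edges :: "('a \<Rightarrow> 'a \<Rightarrow> real) \<Rightarrow> ('a \<times> 'a) set" where
  "edges w = {(x, y). w x y > 0}"

definition path_in :: "('a \<times> 'a) set \<Rightarrow> 'a list \<Rightarrow> 'a \<Rightarrow> 'a \<Rightarrow> bool" where
  "path_in E xs u v \<longleftrightarrow> xs \<noteq> [] \<and> hd xs = u \<and> last xs = v \<and>
     (\<forall>i < length xs - 1. (xs ! i, xs ! Suc i) \<in> E)"

definition path_len :: "('a \<Rightarrow> 'a \<Rightarrow> real) \<Rightarrow> 'a list \<Rightarrow> real" where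
  "path_len \<sigma> xs = (\<Sum>i < length xs - 1. \<sigma> (xs ! i) (xs ! Suc i))"

definition path_dist :: "('a \<times> 'a) set \<Rightarrow> ('a \<Rightarrow> 'a \<Rightarrow> real) \<Rightarrow> 'a \<Rightarrow> 'a \<Rightarrow> real" where
  "path_dist E \<sigma> u v = Inf {path_len \<sigma> xs | xs. path_in E xs u v}"

definition cball_path :: "'a set \<Rightarrow> ('a \<times> 'a) set \<Rightarrow> ('a \<Rightarrow> 'a \<Rightarrow> real) \<Rightarrow> 'a \<Rightarrow> real \<Rightarrow> 'a set" where
  "cball_path V E \<sigma> x r = {y \<in> V. path_dist E \<sigma> x y \<le> r}"

definition simple_weighted_graph :: "'a set \<Rightarrow> ('a \<Rightarrow> 'a \<Rightarrow> real) \<Rightarrow> ('a \<Rightarrow> real) \<Rightarrow> bool" where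
  "simple_weighted_graph V w \<mu> \<longleftrightarrow>
     countable V \<and> infinite V \<and>
     (\<forall>x y. w x y = w y x) \<and> (\<forall>x y. 0 \<le> w x y) \<and>
     (\<forall>x y. 0 < w x y \<longrightarrow> x \<in> V \<and> y \<in> V) \<and>
     (\<forall>x \<in> V. 0 < \<mu> x) \<and>
     (\<forall>x. w x x = 0) \<and>
     (\<forall>x \<in> V. finite {y. 0 < w x y}) \<and>
     (\<forall>x \<in> V. \<forall>y \<in> V. \<exists>xs. path_in (edges w) xs x y)"

definition adapted_weight :: "'a set \<Rightarrow> ('a \<Rightarrow> 'a \<Rightarrow> real) \<Rightarrow> ('a \<Rightarrow> real) \<Rightarrow> ('a \<Rightarrow> 'a \<Rightarrow> real) \<Rightarrow> bool" where
  "adapted_weight V w \<mu> \<sigma> \<longleftrightarrow>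
     (\<forall>(x, y) \<in> edges w. \<sigma> x y = \<sigma> y x \<and> 0 < \<sigma> x y \<and> \<sigma> x y \<le> 1) \<and>
     (\<forall>x \<in> V. (\<Sum>y \<in> {y. 0 < w x y}. w x y * (\<sigma> x y)\<^sup>2) / \<mu> x \<le> 1)"

definition orientation :: "('a \<times> 'a) set \<Rightarrow> ('a \<times> 'a) set \<Rightarrow> bool" where
  "orientation E Ep \<longleftrightarrow> Ep \<subseteq> E \<and>
     (\<forall>(x, y) \<in> E. ((x, y) \<in> Ep \<or> (y, x) \<in> Ep) \<and> \<not> ((x, y) \<in> Ep \<and> (y, x) \<in> Ep))"

text \<open>Vertices of the modified graph: original vertices, and subdivision vertices
  Sub x y i = x^e_i for e = (x,y) in E_o^+ and 1 <= i <= n(e)-1.\<close>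
datatype 'a mvert = Orig 'a | Sub 'a 'a nat

definition pt :: "('a \<Rightarrow> 'a \<Rightarrow> nat) \<Rightarrow> 'a \<Rightarrow> 'a \<Rightarrow> nat \<Rightarrow> 'a mvert" where
  "pt n x y i = (if i = 0 then Orig x else if i = n x y then Orig y else Sub x y i)"

definition sub_verts :: "('a \<Rightarrow> 'a \<Rightarrow> nat) \<Rightarrow> 'a \<Rightarrow> 'a \<Rightarrow> 'a mvert set" where
  "sub_verts n x y = {Sub x y i | i. 1 \<le> i \<and> i \<le> n x y - 1}"

definition mod_V :: "'a set \<Rightarrow> ('a \<times> 'a) set \<Rightarrow> ('a \<Rightarrow> 'a \<Rightarrow> nat) \<Rightarrow> 'a mvert set" where
  "mod_V V Ep n = Orig ` V \<union> (\<Union>(x, y) \<in> Ep. sub_verts n x y)"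

definition mod_E :: "('a \<times> 'a) set \<Rightarrow> ('a \<Rightarrow> 'a \<Rightarrow> nat) \<Rightarrow> ('a mvert \<times> 'a mvert) set" where
  "mod_E Ep n =
     (let P = {(pt n x y i, pt n x y (Suc i)) | x y i. (x, y) \<in> Ep \<and> i < n x y} in P \<union> P\<inverse>)"

text \<open>Modified weight, measure and adapted weight (values off edges are irrelevant).\<close>
fun mod_w :: "('a \<Rightarrow> 'a \<Rightarrow> real) \<Rightarrow> ('a \<times> 'a) set \<Rightarrow> ('a \<Rightarrow> 'a \<Rightarrow> nat) \<Rightarrow> 'a mvert \<Rightarrow> 'a mvert \<Rightarrow> real" where
  "mod_w w Ep n u v = (if (u, v) \<in> mod_E Ep n then
      (case (u, v) of (Sub x y i, _) \<Rightarrow> real (n x y) * w x y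
                    | (_, Sub x y i) \<Rightarrow> real (n x y) * w x y
                    | _ \<Rightarrow> 0) else 0)"

fun mod_mu :: "('a \<Rightarrow> 'a \<Rightarrow> real) \<Rightarrow> ('a \<Rightarrow> real) \<Rightarrow> ('a \<Rightarrow> 'a \<Rightarrow> real) \<Rightarrow> ('a \<Rightarrow> 'a \<Rightarrow> nat) \<Rightarrow> 'a mvert \<Rightarrow> real" where
  "mod_mu w \<mu> \<sigma> n (Orig a) = \<mu> a"
| "mod_mu w \<mu> \<sigma> n (Sub x y i) = 2 * w x y * (\<sigma> x y)\<^sup>2 / real (n x y)"

fun mod_sigma :: "('a \<Rightarrow> 'a \<Rightarrow> real) \<Rightarrow> ('a \<Rightarrow> 'a \<Rightarrow> nat) \<Rightarrow> 'a mvert \<Rightarrow> 'a mvert \<Rightarrow> real" where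
  "mod_sigma \<sigma> n (Sub x y i) _ = \<sigma> x y / real (n x y)"
| "mod_sigma \<sigma> n (Orig a) (Sub x y i) = \<sigma> x y / real (n x y)"
| "mod_sigma \<sigma> n (Orig a) (Orig b) = 0"

definition gcl :: "('b \<times> 'b) set \<Rightarrow> 'b set \<Rightarrow> 'b set" where
  "gcl E K = K \<union> {x. \<exists>y \<in> K. (x, y) \<in> E}"

definition gbdry :: "('b \<times> 'b) set \<Rightarrow> 'b set \<Rightarrow> 'b set" where
  "gbdry E K = gcl E K - K"

definition gint :: "('b \<times> 'b) set \<Rightarrow> 'b set \<Rightarrow> 'b set" where
  "gint E K = \<Union>{L. L \<subseteq> K \<and> gcl E L \<subseteq> K}"

definition Rn :: "nat \<Rightarrow> real" where
  "Rn k = 2 ^ (k + 4)"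

definition Bo :: "'a set \<Rightarrow> ('a \<times> 'a) set \<Rightarrow> ('a \<Rightarrow> 'a \<Rightarrow> nat) \<Rightarrow> ('a \<Rightarrow> 'a \<Rightarrow> real)
    \<Rightarrow> 'a \<Rightarrow> nat \<Rightarrow> 'a mvert set" where
  "Bo V Ep n \<sigma> xb k =
     cball_path (mod_V V Ep n) (mod_E Ep n) (mod_sigma \<sigma> n) (Orig xb) (Rn k - 1) \<inter> Orig ` V"

definition Eo :: "'a set \<Rightarrow> ('a \<Rightarrow> 'a \<Rightarrow> real) \<Rightarrow> ('a \<times> 'a) set \<Rightarrow> ('a \<Rightarrow> 'a \<Rightarrow> nat)
    \<Rightarrow> ('a \<Rightarrow> 'a \<Rightarrow> real) \<Rightarrow> 'a \<Rightarrow> nat \<Rightarrow> ('a \<times> 'a) set" where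
  "Eo V w Ep n \<sigma> xb k =
     {(x, y) \<in> edges w. Orig x \<in> Bo V Ep n \<sigma> xb k \<and> Orig y \<in> Bo V Ep n \<sigma> xb k}"

text \<open>V_e for the orientation of e lying in E_o^+.\<close>
definition Bprime :: "'a set \<Rightarrow> ('a \<Rightarrow> 'a \<Rightarrow> real) \<Rightarrow> ('a \<times> 'a) set \<Rightarrow> ('a \<Rightarrow> 'a \<Rightarrow> nat)
    \<Rightarrow> ('a \<Rightarrow> 'a \<Rightarrow> real) \<Rightarrow> 'a \<Rightarrow> nat \<Rightarrow> 'a mvert set" where
  "Bprime V w Ep n \<sigma> xb k =
     Bo V Ep n \<sigma> xb k \<union> (\<Union>(x, y) \<in> Eo V w Ep n \<sigma> xb k \<inter> Ep. sub_verts n x y)"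

definition Bn :: "'a set \<Rightarrow> ('a \<Rightarrow> 'a \<Rightarrow> real) \<Rightarrow> ('a \<times> 'a) set \<Rightarrow> ('a \<Rightarrow> 'a \<Rightarrow> nat)
    \<Rightarrow> ('a \<Rightarrow> 'a \<Rightarrow> real) \<Rightarrow> 'a \<Rightarrow> nat \<Rightarrow> 'a mvert set" where
  "Bn V w Ep n \<sigma> xb k = gint (mod_E Ep n) (Bprime V w Ep n \<sigma> xb k)"

end

theory Submission
  imports Defs
begin


lemma path_in_single: "path_in E [a] u v \<longleftrightarrow> a = u \<and> a = v"
  by (auto simp: path_in_def)

lemma path_in_Cons2: "path_in E (a # b # l) u v \<longleftrightarrow> a = u \<and> (a, b) \<in> E \<and> path_in E (b # l) b v"
proof -
  have "(\<forall>i < length (a # b # l) - 1. ((a#b#l) ! i, (a#b#l) ! Suc i) \<in> E) \<longleftrightarrow>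
        (a, b) \<in> E \<and> (\<forall>i < length (b # l) - 1. ((b#l) ! i, (b#l) ! Suc i) \<in> E)"
    by (simp add: All_less_Suc2)
  then show ?thesis by (auto simp: path_in_def)
qed

lemma path_len_single: "path_len s [a] = 0"
  by (simp add: path_len_def)

lemma path_len_Cons2: "path_len s (a # b # l) = s a b + path_len s (b # l)"
  by (simp add: path_len_def sum.lessThan_Suc_shift del: sum.lessThan_Suc)

lemma path_concat:
  assumes "path_in E xs u v" "path_in E ys v w"
  shows "path_in E (xs @ tl ys) u w \<and> path_len s (xs @ tl ys) = path_len s xs + path_len s ys"
  using assms
proof (induct xs arbitrary: u)
  case Nil then show ?case by (simp add: path_in_def)
next
  case (Cons x xs)
  show ?case
  proof (cases xs)
    case Nil
    then have "x = u" "x = v" using Cons by (auto simp: path_in_single)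
    moreover have "ys \<noteq> []" "hd ys = v" using Cons by (auto simp: path_in_def)
    ultimately have "[x] @ tl ys = ys" by (cases ys) auto
    then show ?thesis using Cons Nil \<open>x = u\<close> \<open>x = v\<close> by (simp add: path_len_single)
  next
    case (Cons b l)
    note xs = this
    from Cons.prems(1) have h: "x = u" "(x, b) \<in> E" "path_in E xs b v"
      by (auto simp: xs path_in_Cons2)
    from Cons.hyps[OF h(3) Cons.prems(2)] show ?thesis
      using h by (simp add: xs path_in_Cons2 path_len_Cons2)
  qed
qed

lemma path_rev:
  assumes "path_in E xs u v" "\<And>a b. (a, b) \<in> E \<Longrightarrow> (b, a) \<in> E \<and> s b a = s a b"
  shows "path_in E (rev xs) v u \<and> path_len s (rev xs) = path_len s xs"
  using assms(1)
proof (induct xs arbitrary: u)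
  case Nil then show ?case by (simp add: path_in_def)
next
  case (Cons x xs)
  show ?case
  proof (cases xs)
    case Nil then show ?thesis using Cons by (auto simp: path_in_single)
  next
    case (Cons b l)
    note xs = this
    from Cons.prems have h: "x = u" "(x, b) \<in> E" "path_in E xs b v"
      by (auto simp: xs path_in_Cons2)
    have IH: "path_in E (rev xs) v b \<and> path_len s (rev xs) = path_len s xs" using Cons.hyps[OF h(3)] .
    have e: "path_in E [b, x] b u" using h assms(2)[OF h(2)] by (simp add: path_in_Cons2 path_in_single)
    have "rev (x # xs) = rev xs @ tl [b, x]" by simp
    with path_concat[OF conjunct1[OF IH] e, of s] show ?thesis
      using IH assms(2)[OF h(2)] by (simp add: xs path_len_Cons2 path_len_single)
  qed
qed

lemma path_nonneg:
  assumes "path_in E xs u v" "\<And>a b. (a, b) \<in> E \<Longrightarrow> 0 \<le> s a b"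
  shows "0 \<le> path_len s xs"
  using assms(1)
proof (induct xs arbitrary: u)
  case Nil then show ?case by (simp add: path_in_def)
next
  case (Cons x xs)
  show ?case
  proof (cases xs)
    case Nil then show ?thesis by (simp add: path_len_single)
  next
    case (Cons b l)
    note xs = this
    from Cons.prems have h: "(x, b) \<in> E" "path_in E xs b v"
      by (auto simp: xs path_in_Cons2)
    show ?thesis using Cons.hyps[OF h(2)] assms(2)[OF h(1)] by (simp add: xs path_len_Cons2)
  qed
qed

lemma path_rtrancl: "path_in E xs u v \<Longrightarrow> (u, v) \<in> E\<^sup>*"
proof (induct xs arbitrary: u)
  case Nil then show ?case by (simp add: path_in_def)
next
  case (Cons x xs)
  show ?case
  proof (cases xs)
    case Nil then show ?thesis using Cons by (auto simp: path_in_single)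
  next
    case (Cons b l)
    note xs = this
    from Cons.prems have h: "x = u" "(x, b) \<in> E" "path_in E xs b v"
      by (auto simp: xs path_in_Cons2)
    show ?thesis using Cons.hyps[OF h(3)] h by (meson converse_rtrancl_into_rtrancl)
  qed
qed

lemma rtrancl_path: "(u, v) \<in> E\<^sup>* \<Longrightarrow> \<exists>xs. path_in E xs u v"
proof (induct rule: converse_rtrancl_induct)
  case base
  then show ?case using path_in_single by metis
next
  case (step y z)
  then obtain xs where p: "path_in E xs z v" by blast
  then obtain l where xs: "xs = z # l" by (cases xs) (auto simp: path_in_def)
  have "path_in E (y # xs) y v" using p step(1) by (simp add: xs path_in_Cons2)
  then show ?case by blast
qed

lemma D_le:
  assumes "path_in E xs u v" "\<And>a b. (a, b) \<in> E \<Longrightarrow> 0 \<le> s a b"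
  shows "path_dist E s u v \<le> path_len s xs"
  unfolding path_dist_def
  by (rule cInf_lower) (use assms path_nonneg[OF _ assms(2)] in \<open>auto intro!: bdd_belowI[of _ 0]\<close>)

lemma D_nonneg:
  assumes "(u, v) \<in> E\<^sup>*" "\<And>a b. (a, b) \<in> E \<Longrightarrow> 0 \<le> s a b"
  shows "0 \<le> path_dist E s u v"
  unfolding path_dist_def
  by (rule cInf_greatest) (use assms rtrancl_path path_nonneg[OF _ assms(2)] in \<open>auto\<close>)

lemma D_refl:
  assumes "\<And>a b. (a, b) \<in> E \<Longrightarrow> 0 \<le> s a b"
  shows "path_dist E s u u \<le> 0"
  using D_le[of E "[u]" u u s] assms by (simp add: path_in_single path_len_single)

lemma D_edge:
  assumes "(u, v) \<in> E" "\<And>a b. (a, b) \<in> E \<Longrightarrow> 0 \<le> s a b"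
  shows "path_dist E s u v \<le> s u v"
  using D_le[of E "[u, v]" u v s] assms by (simp add: path_in_single path_in_Cons2 path_len_single path_len_Cons2)

lemma D_tri:
  assumes "(u, v) \<in> E\<^sup>*" "(v, w) \<in> E\<^sup>*" "\<And>a b. (a, b) \<in> E \<Longrightarrow> 0 \<le> s a b"
  shows "path_dist E s u w \<le> path_dist E s u v + path_dist E s v w"
proof -
  have A: "{path_len s xs | xs. path_in E xs u v} \<noteq> {}" using rtrancl_path[OF assms(1)] by auto
  have B: "{path_len s xs | xs. path_in E xs v w} \<noteq> {}" using rtrancl_path[OF assms(2)] by auto
  have main: "path_dist E s u w - path_len s ys \<le> path_len s xs"
    if "path_in E xs u v" "path_in E ys v w" for xs ys
    using D_le[of E "xs @ tl ys" u w s] assms(3) path_concat[OF that, of s] by simp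
  have "path_dist E s u w - path_len s ys \<le> path_dist E s u v" if "path_in E ys v w" for ys
    unfolding path_dist_def[of E s u v]
    by (rule cInf_greatest[OF A]) (use main that in auto)
  then have "path_dist E s u w - path_dist E s u v \<le> path_dist E s v w"
    unfolding path_dist_def[of E s v w]
    by (intro cInf_greatest[OF B]) (auto simp: path_dist_def algebra_simps)
  then show ?thesis by simp
qed

lemma D_sym:
  assumes "\<And>a b. (a, b) \<in> E \<Longrightarrow> (b, a) \<in> E \<and> s b a = s a b"
  shows "path_dist E s u v = path_dist E s v u"
proof -
  have "{path_len s xs | xs. path_in E xs u v} = {path_len s xs | xs. path_in E xs v u}" (is "?A = ?B")
  proof
    show "?A \<subseteq> ?B"
    proof
      fix t assume "t \<in> ?A"
      then obtain xs where t: "t = path_len s xs" "path_in E xs u v" by blast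
      from path_rev[OF t(2) assms] t(1) show "t \<in> ?B" by (auto intro!: exI[of _ "rev xs"])
    qed
    show "?B \<subseteq> ?A"
    proof
      fix t assume "t \<in> ?B"
      then obtain xs where t: "t = path_len s xs" "path_in E xs v u" by blast
      from path_rev[OF t(2) assms] t(1) show "t \<in> ?A" by (auto intro!: exI[of _ "rev xs"])
    qed
  qed
  then show ?thesis by (simp add: path_dist_def)
qed



lemma gint_iff: "v \<in> gint E K \<longleftrightarrow> v \<in> K \<and> (\<forall>u. (u, v) \<in> E \<longrightarrow> u \<in> K)"
proof
  assume "v \<in> gint E K"
  then obtain L where "v \<in> L" "L \<subseteq> K" "gcl E L \<subseteq> K" by (auto simp: gint_def)
  then show "v \<in> K \<and> (\<forall>u. (u, v) \<in> E \<longrightarrow> u \<in> K)" by (auto simp: gcl_def)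
next
  assume "v \<in> K \<and> (\<forall>u. (u, v) \<in> E \<longrightarrow> u \<in> K)"
  then have "{v} \<subseteq> K" "gcl E {v} \<subseteq> K" by (auto simp: gcl_def)
  then show "v \<in> gint E K" by (auto simp: gint_def)
qed

lemma gbdry_gint: "z \<in> gbdry E (gint E K) \<Longrightarrow> z \<in> K \<and> z \<notin> gint E K"
  by (auto simp: gbdry_def gcl_def gint_iff)

lemma gint_sub: "gint E K \<subseteq> K"
  by (auto simp: gint_iff)

lemma pt_Orig: "pt n a b j = Orig c \<longleftrightarrow> (j = 0 \<and> c = a) \<or> (j \<noteq> 0 \<and> j = n a b \<and> c = b)"
  by (auto simp: pt_def)

lemma pt_Sub: "pt n a b j = Sub x y i \<longleftrightarrow> j \<noteq> 0 \<and> j \<noteq> n a b \<and> a = x \<and> b = y \<and> j = i"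
  by (auto simp: pt_def)

locale mg =
  fixes V :: "'a set" and w :: "'a \<Rightarrow> 'a \<Rightarrow> real" and \<sigma> :: "'a \<Rightarrow> 'a \<Rightarrow> real"
    and Ep :: "('a \<times> 'a) set" and n :: "'a \<Rightarrow> 'a \<Rightarrow> nat"
  assumes Epw: "Ep \<subseteq> edges w"
    and orient2: "\<forall>(x, y) \<in> edges w. (x, y) \<in> Ep \<or> (y, x) \<in> Ep"
    and n2: "\<forall>(x, y) \<in> Ep. 2 \<le> n x y"
    and sig: "\<forall>(x, y) \<in> Ep. 0 < \<sigma> x y \<and> \<sigma> x y \<le> 1"
    and EV: "\<forall>(x, y) \<in> edges w. x \<in> V \<and> y \<in> V"
    and conn: "\<forall>x \<in> V. \<forall>y \<in> V. \<exists>xs. path_in (edges w) xs x y"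
begin

abbreviation "EE \<equiv> mod_E Ep n"
abbreviation "ss \<equiv> mod_sigma \<sigma> n"
abbreviation "DD \<equiv> path_dist EE ss"

lemma mod_E_iff: "(u, v) \<in> EE \<longleftrightarrow> (\<exists>x y i. (x, y) \<in> Ep \<and> i < n x y \<and>
   ((u, v) = (pt n x y i, pt n x y (Suc i)) \<or> (v, u) = (pt n x y i, pt n x y (Suc i))))"
  unfolding mod_E_def Let_def by blast

lemma n2': "(x, y) \<in> Ep \<Longrightarrow> 2 \<le> n x y" using n2 by auto

lemma s_pt:
  assumes "(x, y) \<in> Ep" "i < n x y"
  shows "ss (pt n x y i) (pt n x y (Suc i)) = \<sigma> x y / n x y \<and> ss (pt n x y (Suc i)) (pt n x y i) = \<sigma> x y / n x y"
  using n2'[OF assms(1)] assms(2) by (auto simp: pt_def)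

lemma E_cases:
  assumes "(u, v) \<in> EE"
  shows "\<exists>x y. (x, y) \<in> Ep \<and> ss u v = \<sigma> x y / n x y \<and> ss v u = \<sigma> x y / n x y"
  using assms s_pt unfolding mod_E_iff by fastforce

lemma s_nonneg: "(u, v) \<in> EE \<Longrightarrow> 0 \<le> ss u v"
  using E_cases sig by fastforce

lemma E_symm: "(u, v) \<in> EE \<Longrightarrow> (v, u) \<in> EE \<and> ss v u = ss u v"
  using E_cases[of u v] by (auto simp: mod_E_iff)

lemma pt_edge: "(x, y) \<in> Ep \<Longrightarrow> i < n x y \<Longrightarrow> (pt n x y i, pt n x y (Suc i)) \<in> EE"
  unfolding mod_E_iff by blast

lemma pt_dist:
  assumes "(x, y) \<in> Ep" "i \<le> j"
  shows "j \<le> n x y \<longrightarrow> (pt n x y i, pt n x y j) \<in> EE\<^sup>* \<and>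
     DD (pt n x y i) (pt n x y j) \<le> real (j - i) * (\<sigma> x y / n x y)"
  using assms(2)
proof (induct j rule: dec_induct)
  case base
  then show ?case using D_refl[of EE ss] s_nonneg by auto
next
  case (step k)
  show ?case
  proof
    assume "Suc k \<le> n x y"
    then have e: "(pt n x y k, pt n x y (Suc k)) \<in> EE" using pt_edge assms(1) by auto
    from step(3) \<open>Suc k \<le> n x y\<close> have r: "(pt n x y i, pt n x y k) \<in> EE\<^sup>*" "DD (pt n x y i) (pt n x y k) \<le> real (k - i) * (\<sigma> x y / n x y)"
      by auto
    have "DD (pt n x y i) (pt n x y (Suc k)) \<le> DD (pt n x y i) (pt n x y k) + DD (pt n x y k) (pt n x y (Suc k))"
      by (rule D_tri) (use r e s_nonneg in auto)
    also have "DD (pt n x y k) (pt n x y (Suc k)) \<le> \<sigma> x y / n x y"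
      using D_edge[of "pt n x y k" "pt n x y (Suc k)" EE ss, OF e s_nonneg] s_pt[OF assms(1), of k] \<open>Suc k \<le> n x y\<close> by auto
    finally have 1: "DD (pt n x y i) (pt n x y (Suc k)) \<le> DD (pt n x y i) (pt n x y k) + \<sigma> x y / n x y" by simp
    have 2: "real (Suc k - i) * (\<sigma> x y / n x y) = real (k - i) * (\<sigma> x y / n x y) + \<sigma> x y / n x y"
      using step(1) by (simp add: Suc_diff_le algebra_simps add_divide_distrib diff_divide_distrib)
    have "DD (pt n x y i) (pt n x y (Suc k)) \<le> real (Suc k - i) * (\<sigma> x y / n x y)"
      using 1 2 r(2) by linarith
    then show "(pt n x y i, pt n x y (Suc k)) \<in> EE\<^sup>* \<and> DD (pt n x y i) (pt n x y (Suc k)) \<le> real (Suc k - i) * (\<sigma> x y / n x y)"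
      using r e by auto
  qed
qed

lemma rtr_sym: "(u, v) \<in> EE\<^sup>* \<Longrightarrow> (v, u) \<in> EE\<^sup>*"
proof (induct rule: rtrancl_induct)
  case base then show ?case by simp
next
  case (step y z)
  then show ?case using E_symm by (meson converse_rtrancl_into_rtrancl)
qed

lemma pt_D1:
  assumes "(x, y) \<in> Ep" "i \<le> n x y" "j \<le> n x y"
  shows "(pt n x y i, pt n x y j) \<in> EE\<^sup>* \<and> DD (pt n x y i) (pt n x y j) \<le> 1"
proof -
  have bnd: "real (b - a) * (\<sigma> x y / n x y) \<le> 1" if "b \<le> n x y" for a b
  proof -
    have np: "0 < real (n x y)" using n2'[OF assms(1)] by auto
    have "real (b - a) * (\<sigma> x y / n x y) \<le> real (n x y) * (\<sigma> x y / n x y)"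
      using that sig assms(1) by (intro mult_right_mono) auto
    also have "\<dots> = \<sigma> x y" using np by simp
    also have "\<dots> \<le> 1" using sig assms(1) by auto
    finally show ?thesis .
  qed
  show ?thesis
  proof (cases "i \<le> j")
    case True
    then show ?thesis using pt_dist[OF assms(1) True] bnd[of j i] assms(3) by auto
  next
    case False
    then have "j \<le> i" by simp
    from pt_dist[OF assms(1) this] assms bnd[of i j] have
      "(pt n x y j, pt n x y i) \<in> EE\<^sup>*" "DD (pt n x y j) (pt n x y i) \<le> 1" by auto
    then show ?thesis using rtr_sym D_sym[of EE ss] E_symm by metis
  qed
qed

lemma pt_n: "pt n x y 0 = Orig x" "0 < n x y \<Longrightarrow> pt n x y (n x y) = Orig y"
  by (auto simp: pt_def)

lemma pt_mid: "1 \<le> i \<Longrightarrow> i < n x y \<Longrightarrow> pt n x y i = Sub x y i"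
  by (auto simp: pt_def)

lemma edge_conn: "(a, b) \<in> edges w \<Longrightarrow> (Orig a, Orig b) \<in> EE\<^sup>*"
proof -
  assume "(a, b) \<in> edges w"
  then consider "(a, b) \<in> Ep" | "(b, a) \<in> Ep" using orient2 by auto
  then show ?thesis
  proof cases
    case 1
    then show ?thesis using pt_D1[OF 1, of 0 "n a b"] pt_n[of a b] n2'[OF 1] by auto
  next
    case 2
    then show ?thesis using pt_D1[OF 2, of 0 "n b a"] pt_n[of b a] n2'[OF 2] rtr_sym by auto
  qed
qed

lemma orig_conn: "a \<in> V \<Longrightarrow> b \<in> V \<Longrightarrow> (Orig a, Orig b) \<in> EE\<^sup>*"
proof -
  assume "a \<in> V" "b \<in> V"
  then obtain xs where "path_in (edges w) xs a b" using conn by blast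
  then have "(a, b) \<in> (edges w)\<^sup>*" by (rule path_rtrancl)
  then show ?thesis
  proof (induct rule: rtrancl_induct)
    case base then show ?case by simp
  next
    case (step y z)
    then show ?case using edge_conn by (meson rtrancl_trans)
  qed
qed

lemma sub_verts_iff: "u \<in> sub_verts n x y \<longleftrightarrow> (\<exists>i. u = Sub x y i \<and> 1 \<le> i \<and> i \<le> n x y - 1)"
  by (auto simp: sub_verts_def)

lemma Ep_V: "(x, y) \<in> Ep \<Longrightarrow> x \<in> V \<and> y \<in> V"
  using Epw EV by auto

lemma sub_D1:
  assumes "(x, y) \<in> Ep" "u \<in> sub_verts n x y"
  shows "(u, Orig x) \<in> EE\<^sup>* \<and> DD u (Orig x) \<le> 1 \<and> (u, Orig y) \<in> EE\<^sup>* \<and> DD u (Orig y) \<le> 1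
       \<and> (Orig x, u) \<in> EE\<^sup>* \<and> DD (Orig x) u \<le> 1"
proof -
  obtain i where i: "u = Sub x y i" "1 \<le> i" "i \<le> n x y - 1" using assms(2) sub_verts_iff by auto
  have np: "2 \<le> n x y" using n2' assms(1) by auto
  then have u: "u = pt n x y i" using i pt_mid by auto
  show ?thesis using pt_D1[OF assms(1), of i 0] pt_D1[OF assms(1), of i "n x y"] pt_D1[OF assms(1), of 0 i]
    u i pt_n[of x y] np by auto
qed

lemma modV_conn:
  assumes "xb \<in> V" "u \<in> mod_V V Ep n"
  shows "(Orig xb, u) \<in> EE\<^sup>*"
proof -
  consider "u \<in> Orig ` V" | x y where "(x, y) \<in> Ep" "u \<in> sub_verts n x y"
    using assms(2) unfolding mod_V_def by blast
  then show ?thesis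
  proof cases
    case 1 then show ?thesis using orig_conn assms(1) by auto
  next
    case 2
    then show ?thesis using sub_D1[OF 2] orig_conn[OF assms(1)] Ep_V[OF 2(1)] by (meson rtrancl_trans)
  qed
qed

lemma modV_conn2:
  assumes "xb \<in> V" "u \<in> mod_V V Ep n" "v \<in> mod_V V Ep n"
  shows "(u, v) \<in> EE\<^sup>*"
  using modV_conn[OF assms(1,2)] modV_conn[OF assms(1,3)] rtr_sym by (meson rtrancl_trans)

lemma nbr_Sub:
  assumes "(x, y) \<in> Ep" "z \<in> sub_verts n x y" "(u, z) \<in> EE"
  shows "u \<in> Orig ` {x, y} \<union> sub_verts n x y"
proof -
  obtain i where i: "z = Sub x y i" "1 \<le> i" "i \<le> n x y - 1" using assms(2) sub_verts_iff by auto
  from assms(3) obtain a b j where j: "(a, b) \<in> Ep" "j < n a b"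
    "(u, z) = (pt n a b j, pt n a b (Suc j)) \<or> (z, u) = (pt n a b j, pt n a b (Suc j))"
    unfolding mod_E_iff by blast
  from j(3) show ?thesis
  proof
    assume h: "(u, z) = (pt n a b j, pt n a b (Suc j))"
    then have "pt n a b (Suc j) = Sub x y i" using i(1) by simp
    then have "a = x \<and> b = y \<and> Suc j = i" unfolding pt_Sub by simp
    then have "a = x" "b = y" "Suc j = i" by auto
    then show ?thesis using h i by (auto simp: pt_def sub_verts_iff)
  next
    assume h: "(z, u) = (pt n a b j, pt n a b (Suc j))"
    then have "pt n a b j = Sub x y i" using i(1) by simp
    then have "a = x \<and> b = y \<and> j = i" unfolding pt_Sub by simp
    then have "a = x" "b = y" "j = i" by auto
    then show ?thesis using h i j by (auto simp: pt_def sub_verts_iff)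
  qed
qed

lemma nbr_Orig:
  assumes "(u, Orig c) \<in> EE"
  shows "\<exists>x y. (x, y) \<in> Ep \<and> u \<in> sub_verts n x y \<and> (c = x \<or> c = y)"
proof -
  from assms obtain a b j where j: "(a, b) \<in> Ep" "j < n a b"
    "(u, Orig c) = (pt n a b j, pt n a b (Suc j)) \<or> (Orig c, u) = (pt n a b j, pt n a b (Suc j))"
    unfolding mod_E_iff by blast
  have np: "2 \<le> n a b" using n2' j(1) by auto
  from j(3) show ?thesis
  proof
    assume h: "(u, Orig c) = (pt n a b j, pt n a b (Suc j))"
    then have "Suc j = n a b" "c = b" using pt_Orig[of n a b "Suc j" c] by auto
    then have "u = Sub a b j" "1 \<le> j" using h np by (auto simp: pt_def)
    then show ?thesis using j(1) \<open>c = b\<close> \<open>Suc j = n a b\<close> by (auto simp: sub_verts_iff)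
  next
    assume h: "(Orig c, u) = (pt n a b j, pt n a b (Suc j))"
    then have "j = 0" "c = a" using pt_Orig[of n a b j c] j(2) by auto
    then have "u = Sub a b 1" using h np by (auto simp: pt_def)
    then show ?thesis using j(1) \<open>c = a\<close> np by (auto simp: sub_verts_iff)
  qed
qed

end


context mg begin

lemma tri:
  assumes "xb \<in> V" "u \<in> mod_V V Ep n" "v \<in> mod_V V Ep n" "z \<in> mod_V V Ep n"
  shows "DD u z \<le> DD u v + DD v z"
  by (rule D_tri) (use modV_conn2[OF assms(1)] assms s_nonneg in auto)

lemma ends_D1:
  assumes "(x, y) \<in> Ep" "a \<in> {x, y}" "c \<in> {x, y}"
  shows "DD (Orig a) (Orig c) \<le> 1"
proof -
  have np: "0 < n x y" using n2'[OF assms(1)] by auto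
  have "Orig a \<in> {pt n x y 0, pt n x y (n x y)}" "Orig c \<in> {pt n x y 0, pt n x y (n x y)}"
    using assms pt_n[of x y] np by auto
  then show ?thesis using pt_D1[OF assms(1), of 0 0] pt_D1[OF assms(1), of 0 "n x y"]
    pt_D1[OF assms(1), of "n x y" 0] pt_D1[OF assms(1), of "n x y" "n x y"] by auto
qed

lemma Orig_modV: "a \<in> V \<Longrightarrow> Orig a \<in> mod_V V Ep n"
  by (auto simp: mod_V_def)

lemma sub_modV: "(x, y) \<in> Ep \<Longrightarrow> sub_verts n x y \<subseteq> mod_V V Ep n"
  by (auto simp: mod_V_def)

lemma Bo_sub: "Bo V Ep n \<sigma> xb k \<subseteq> Orig ` V"
  by (auto simp: Bo_def)

lemma Bp_cases:
  assumes "z \<in> Bprime V w Ep n \<sigma> xb k"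
  obtains "z \<in> Bo V Ep n \<sigma> xb k" | x y where "(x, y) \<in> Eo V w Ep n \<sigma> xb k" "(x, y) \<in> Ep" "z \<in> sub_verts n x y"
  using assms unfolding Bprime_def by blast

lemma Bp_sub_modV: "Bprime V w Ep n \<sigma> xb k \<subseteq> mod_V V Ep n"
proof
  fix z assume "z \<in> Bprime V w Ep n \<sigma> xb k"
  then show "z \<in> mod_V V Ep n"
  proof (cases rule: Bp_cases)
    case 1 then show ?thesis using Bo_sub Orig_modV by blast
  next
    case 2 then show ?thesis using sub_modV by blast
  qed
qed

lemma sub_notOrig: "z \<in> sub_verts n x y \<Longrightarrow> z \<notin> Orig ` V"
  by (auto simp: sub_verts_iff)

lemma Bo_iff: "Orig a \<in> Bo V Ep n \<sigma> xb k \<longleftrightarrow> a \<in> V \<and> DD (Orig xb) (Orig a) \<le> Rn k - 1"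
  by (auto simp: Bo_def cball_path_def Orig_modV)

lemma Eo_mem:
  assumes "(x, y) \<in> Ep" "Orig x \<in> Bo V Ep n \<sigma> xb k" "Orig y \<in> Bo V Ep n \<sigma> xb k"
  shows "sub_verts n x y \<subseteq> Bprime V w Ep n \<sigma> xb k"
proof -
  have "(x, y) \<in> Eo V w Ep n \<sigma> xb k \<inter> Ep" using assms Epw unfolding Eo_def by auto
  then show ?thesis unfolding Bprime_def by fastforce
qed

lemma Bo_Bp: "Bo V Ep n \<sigma> xb k \<subseteq> Bprime V w Ep n \<sigma> xb k"
  unfolding Bprime_def by (rule Un_upper1)

lemma Eo_ends: "(x, y) \<in> Eo V w Ep n \<sigma> xb k \<Longrightarrow> Orig x \<in> Bo V Ep n \<sigma> xb k \<and> Orig y \<in> Bo V Ep n \<sigma> xb k"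
  unfolding Eo_def by auto

lemma part1: "gbdry EE (Bn V w Ep n \<sigma> xb k) \<subseteq> Orig ` V"
proof
  fix z assume "z \<in> gbdry EE (Bn V w Ep n \<sigma> xb k)"
  then have z: "z \<in> Bprime V w Ep n \<sigma> xb k" "z \<notin> gint EE (Bprime V w Ep n \<sigma> xb k)"
    unfolding Bn_def by (simp_all add: gbdry_gint)
  show "z \<in> Orig ` V"
  proof (cases rule: Bp_cases[OF z(1)])
    case 1 then show ?thesis using Bo_sub by auto
  next
    case (2 x y)
    have "Orig x \<in> Bprime V w Ep n \<sigma> xb k" "Orig y \<in> Bprime V w Ep n \<sigma> xb k"
      using Eo_ends[OF 2(1)] Bo_Bp by auto
    moreover have "sub_verts n x y \<subseteq> Bprime V w Ep n \<sigma> xb k" using Eo_ends[OF 2(1)] Eo_mem[OF 2(2)] by auto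
    ultimately have "\<forall>u. (u, z) \<in> EE \<longrightarrow> u \<in> Bprime V w Ep n \<sigma> xb k"
      using nbr_Sub[OF 2(2,3)] by auto
    then have "z \<in> gint EE (Bprime V w Ep n \<sigma> xb k)"
      using z(1) unfolding gint_iff by simp
    with z(2) show ?thesis by blast
  qed
qed

lemma part2b:
  assumes "xb \<in> V"
  shows "Bn V w Ep n \<sigma> xb k \<subseteq> cball_path (mod_V V Ep n) EE ss (Orig xb) (Rn k)"
proof
  fix z assume "z \<in> Bn V w Ep n \<sigma> xb k"
  then have z: "z \<in> Bprime V w Ep n \<sigma> xb k" unfolding Bn_def by (simp add: gint_iff)
  then have zV: "z \<in> mod_V V Ep n" by (rule subsetD[OF Bp_sub_modV])
  show "z \<in> cball_path (mod_V V Ep n) EE ss (Orig xb) (Rn k)"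
  proof (cases rule: Bp_cases[OF z])
    case 1
    then have "DD (Orig xb) z \<le> Rn k - 1" by (simp add: Bo_def cball_path_def)
    then show ?thesis using zV by (simp add: cball_path_def)
  next
    case (2 x y)
    have xV: "x \<in> V" using Ep_V[OF 2(2)] by auto
    have "DD (Orig xb) z \<le> DD (Orig xb) (Orig x) + DD (Orig x) z"
      using tri[OF assms Orig_modV[OF assms] Orig_modV[OF xV] zV] .
    moreover have "DD (Orig xb) (Orig x) \<le> Rn k - 1" using Eo_ends[OF 2(1)] by (simp add: Bo_iff)
    moreover have "DD (Orig x) z \<le> 1" using sub_D1[OF 2(2,3)] by auto
    ultimately show ?thesis using zV by (auto simp: cball_path_def)
  qed
qed

lemma part2a:
  assumes "xb \<in> V"
  shows "cball_path (mod_V V Ep n) EE ss (Orig xb) (Rn k - 3) \<subseteq> Bn V w Ep n \<sigma> xb k"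
proof
  fix z assume "z \<in> cball_path (mod_V V Ep n) EE ss (Orig xb) (Rn k - 3)"
  then have zV: "z \<in> mod_V V Ep n" and dz: "DD (Orig xb) z \<le> Rn k - 3"
    by (auto simp: cball_path_def)
  have xbV: "Orig xb \<in> mod_V V Ep n" using Orig_modV[OF assms] .
  consider "z \<in> Orig ` V" | x y where "(x, y) \<in> Ep" "z \<in> sub_verts n x y"
    using zV unfolding mod_V_def by blast
  then show "z \<in> Bn V w Ep n \<sigma> xb k"
  proof cases
    case 1
    then obtain a where a: "z = Orig a" "a \<in> V" by auto
    have zB: "z \<in> Bo V Ep n \<sigma> xb k" using a dz Bo_iff by auto
    have "u \<in> Bprime V w Ep n \<sigma> xb k" if uz: "(u, z) \<in> EE" for u
    proof -
      obtain x y where xy: "(x, y) \<in> Ep" "u \<in> sub_verts n x y" "a = x \<or> a = y"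
        using nbr_Orig[of u a] uz a(1) by blast
      have c: "Orig c \<in> Bo V Ep n \<sigma> xb k" if c: "c \<in> {x, y}" for c
      proof -
        have cV: "c \<in> V" using Ep_V[OF xy(1)] c by auto
        have "DD (Orig xb) (Orig c) \<le> DD (Orig xb) (Orig a) + DD (Orig a) (Orig c)"
          using tri[OF assms xbV Orig_modV[OF a(2)] Orig_modV[OF cV]] .
        moreover have "DD (Orig a) (Orig c) \<le> 1" using ends_D1[OF xy(1) _ c] xy(3) by auto
        ultimately show ?thesis using dz a cV Bo_iff by auto
      qed
      show ?thesis using Eo_mem[OF xy(1) c c] xy(2) by auto
    qed
    then show ?thesis using zB Bo_Bp unfolding Bn_def gint_iff by blast
  next
    case (2 x y)
    have c: "Orig c \<in> Bo V Ep n \<sigma> xb k" if c: "c \<in> {x, y}" for c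
    proof -
      have cV: "c \<in> V" using Ep_V[OF 2(1)] c by auto
      have "DD (Orig xb) (Orig c) \<le> DD (Orig xb) z + DD z (Orig c)"
        using tri[OF assms xbV zV Orig_modV[OF cV]] .
      moreover have "DD z (Orig c) \<le> 1" using sub_D1[OF 2] c by auto
      ultimately show ?thesis using dz cV Bo_iff by auto
    qed
    have sub: "sub_verts n x y \<subseteq> Bprime V w Ep n \<sigma> xb k" using Eo_mem[OF 2(1) c c] by auto
    have ends: "Orig ` {x, y} \<subseteq> Bprime V w Ep n \<sigma> xb k" using c Bo_Bp by auto
    have "\<forall>u. (u, z) \<in> EE \<longrightarrow> u \<in> Bprime V w Ep n \<sigma> xb k"
      using sub ends nbr_Sub[OF 2] by auto
    then show ?thesis using sub 2(2) unfolding Bn_def gint_iff by blast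
  qed
qed

lemma part3:
  assumes "xb \<in> V" "1 \<le> k" "x \<in> gbdry EE (Bn V w Ep n \<sigma> xb (k - 1))"
    "y \<in> gbdry EE (Bn V w Ep n \<sigma> xb k)"
  shows "Rn (k - 1) - 3 \<le> DD x y"
proof -
  have xO: "x \<in> Orig ` V" using part1 assms(3) by blast
  have xB: "x \<in> Bprime V w Ep n \<sigma> xb (k - 1)" using gbdry_gint[of x EE "Bprime V w Ep n \<sigma> xb (k - 1)"] assms(3) unfolding Bn_def by simp
  have xBo: "x \<in> Bo V Ep n \<sigma> xb (k - 1)"
    by (cases rule: Bp_cases[OF xB]) (use xO sub_notOrig in auto)
  obtain a where a: "x = Orig a" "a \<in> V" using xO by auto
  have dx: "DD (Orig xb) x \<le> Rn (k - 1) - 1" using xBo a Bo_iff by auto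
  have yB: "y \<in> Bprime V w Ep n \<sigma> xb k" "y \<notin> Bn V w Ep n \<sigma> xb k"
    using gbdry_gint[of y EE "Bprime V w Ep n \<sigma> xb k"] assms(4) unfolding Bn_def by simp_all
  have yV: "y \<in> mod_V V Ep n" using yB(1) by (rule subsetD[OF Bp_sub_modV])
  have dy: "\<not> DD (Orig xb) y \<le> Rn k - 3" using yB(2) part2a[OF assms(1), of k] yV
    by (auto simp: cball_path_def)
  have "DD (Orig xb) y \<le> DD (Orig xb) x + DD x y"
    using tri[OF assms(1) Orig_modV[OF assms(1)] Orig_modV[OF a(2)] yV] a(1) by simp
  moreover have "Rn k = 2 * Rn (k - 1)" using assms(2)
    by (cases k) (simp_all add: Rn_def power_add)
  ultimately show ?thesis using dx dy by linarith
qed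

end

theorem lemma4p3:
  fixes V :: "'a set" and w :: "'a \<Rightarrow> 'a \<Rightarrow> real" and \<mu> :: "'a \<Rightarrow> real"
    and \<sigma> :: "'a \<Rightarrow> 'a \<Rightarrow> real" and Ep :: "('a \<times> 'a) set"
    and n :: "'a \<Rightarrow> 'a \<Rightarrow> nat" and xb :: 'a
  assumes graph: "simple_weighted_graph V w \<mu>"
    and adapted: "adapted_weight V w \<mu> \<sigma>"
    and orient: "orientation (edges w) Ep"
    and n_sym: "\<forall>(x, y) \<in> edges w. n x y = n y x"
    and n_ge2: "\<forall>(x, y) \<in> edges w. 2 \<le> n x y"
    and xb: "xb \<in> V"
    and finite_balls: "\<forall>v \<in> mod_V V Ep n. \<forall>r.
        finite (cball_path (mod_V V Ep n) (mod_E Ep n) (mod_sigma \<sigma> n) v r)"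
  shows
    "(\<forall>k. gbdry (mod_E Ep n) (Bn V w Ep n \<sigma> xb k) \<subseteq> Orig ` V)
   \<and> (\<forall>k. cball_path (mod_V V Ep n) (mod_E Ep n) (mod_sigma \<sigma> n) (Orig xb) (Rn k - 3)
            \<subseteq> Bn V w Ep n \<sigma> xb k
        \<and> Bn V w Ep n \<sigma> xb k
            \<subseteq> cball_path (mod_V V Ep n) (mod_E Ep n) (mod_sigma \<sigma> n) (Orig xb) (Rn k))
   \<and> (\<forall>k \<ge> 1. \<forall>x \<in> gbdry (mod_E Ep n) (Bn V w Ep n \<sigma> xb (k - 1)).
        \<forall>y \<in> gbdry (mod_E Ep n) (Bn V w Ep n \<sigma> xb k).
          Rn (k - 1) - 3 \<le> path_dist (mod_E Ep n) (mod_sigma \<sigma> n) x y)"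
  proof -
  have Epw: "Ep \<subseteq> edges w" using orient by (simp add: orientation_def)
  interpret mg V w \<sigma> Ep n
  proof
    show "Ep \<subseteq> edges w" by (rule Epw)
    show "\<forall>(x, y) \<in> edges w. (x, y) \<in> Ep \<or> (y, x) \<in> Ep" using orient by (auto simp: orientation_def)
    show "\<forall>(x, y) \<in> Ep. 2 \<le> n x y" using n_ge2 Epw by auto
    show "\<forall>(x, y) \<in> Ep. 0 < \<sigma> x y \<and> \<sigma> x y \<le> 1" using adapted Epw by (auto simp: adapted_weight_def)
    show "\<forall>(x, y) \<in> edges w. x \<in> V \<and> y \<in> V" using graph by (auto simp: simple_weighted_graph_def edges_def)
    show "\<forall>x \<in> V. \<forall>y \<in> V. \<exists>xs. path_in (edges w) xs x y" using graph by (simp add: simple_weighted_graph_def)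
  qed
  have A: "\<forall>k. gbdry (mod_E Ep n) (Bn V w Ep n \<sigma> xb k) \<subseteq> Orig ` V" using part1 by blast
  have B: "\<forall>k. cball_path (mod_V V Ep n) (mod_E Ep n) (mod_sigma \<sigma> n) (Orig xb) (Rn k - 3)
            \<subseteq> Bn V w Ep n \<sigma> xb k
        \<and> Bn V w Ep n \<sigma> xb k
            \<subseteq> cball_path (mod_V V Ep n) (mod_E Ep n) (mod_sigma \<sigma> n) (Orig xb) (Rn k)"
    using part2a[OF xb] part2b[OF xb] by blast
  have C: "\<forall>k \<ge> 1. \<forall>x \<in> gbdry (mod_E Ep n) (Bn V w Ep n \<sigma> xb (k - 1)).
        \<forall>y \<in> gbdry (mod_E Ep n) (Bn V w Ep n \<sigma> xb k).
          Rn (k - 1) - 3 \<le> path_dist (mod_E Ep n) (mod_sigma \<sigma> n) x y"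
    using part3[OF xb] by blast
  show ?thesis using A B C by blast
qed

end
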